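(* If $G$ is a finite nonabelian group, then $Z_{K(G)}=\bigcap_{\psi\in\mathcal{X}}Z(\psi)$.
   Context: For $\chi\in\mathrm{Irr}(G)$, the center of $\chi$ is $Z(\chi)=\{g\in G : |\chi(g)|=\chi(1)\}$. Let $\mathcal{X}=\{\chi\in\mathrm{Irr}(G) : Z(\chi)>Z(G)\}$ (strict containment) and $K(G)=\bigcap_{\chi\in\mathcal{X}}\ker(\chi)$. For a normal subgroup $N$ of $G$, $Z_N$ is defined by $Z_N/N=Z(G/N)$. *)

theory Defs
  imports "HOL-Algebra.Algebra" "Jordan_Normal_Form.Matrix"
begin

definition group_center :: "('a, 'b) monoid_scheme \<Rightarrow> 'a set" where
  "group_center G = {z \<in> carrier G. \<forall>x \<in> carrier G. z \<otimes>\<^bsub>G\<^esub> x = x \<otimes>\<^bsub>G\<^esub> z}"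

definition Z_rel :: "('a, 'b) monoid_scheme \<Rightarrow> 'a set \<Rightarrow> 'a set" where
  "Z_rel G N = {g \<in> carrier G. N #>\<^bsub>G\<^esub> g \<in> group_center (G Mod N)}"

definition mat_trace :: "complex mat \<Rightarrow> complex" where
  "mat_trace A = (\<Sum>i<dim_row A. A $$ (i, i))"

definition representation :: "('a, 'b) monoid_scheme \<Rightarrow> nat \<Rightarrow> ('a \<Rightarrow> complex mat) \<Rightarrow> bool" where
  "representation G n \<rho> \<longleftrightarrow>
     (\<forall>g \<in> carrier G. \<rho> g \<in> carrier_mat n n) \<and>
     (\<forall>g \<in> carrier G. \<forall>h \<in> carrier G. \<rho> (g \<otimes>\<^bsub>G\<^esub> h) = \<rho> g * \<rho> h) \<and>
     \<rho> \<one>\<^bsub>G\<^esub> = 1\<^sub>m n"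

definition invariant_subspace :: "('a, 'b) monoid_scheme \<Rightarrow> nat \<Rightarrow> ('a \<Rightarrow> complex mat) \<Rightarrow> complex vec set \<Rightarrow> bool" where
  "invariant_subspace G n \<rho> W \<longleftrightarrow>
     W \<subseteq> carrier_vec n \<and> 0\<^sub>v n \<in> W \<and>
     (\<forall>v \<in> W. \<forall>w \<in> W. v + w \<in> W) \<and>
     (\<forall>c :: complex. \<forall>v \<in> W. c \<cdot>\<^sub>v v \<in> W) \<and>
     (\<forall>g \<in> carrier G. \<forall>v \<in> W. \<rho> g *\<^sub>v v \<in> W)"

definition irreducible_rep :: "('a, 'b) monoid_scheme \<Rightarrow> nat \<Rightarrow> ('a \<Rightarrow> complex mat) \<Rightarrow> bool" where
  "irreducible_rep G n \<rho> \<longleftrightarrow> representation G n \<rho> \<and> n > 0 \<and>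
     (\<forall>W. invariant_subspace G n \<rho> W \<longrightarrow> W = {0\<^sub>v n} \<or> W = carrier_vec n)"

definition Irr :: "('a, 'b) monoid_scheme \<Rightarrow> ('a \<Rightarrow> complex) set" where
  "Irr G = {\<chi>. \<exists>n \<rho>. irreducible_rep G n \<rho> \<and> \<chi> = (\<lambda>g \<in> carrier G. mat_trace (\<rho> g))}"

definition char_center :: "('a, 'b) monoid_scheme \<Rightarrow> ('a \<Rightarrow> complex) \<Rightarrow> 'a set" where
  "char_center G \<chi> = {g \<in> carrier G. complex_of_real (cmod (\<chi> g)) = \<chi> \<one>\<^bsub>G\<^esub>}"

definition char_kernel :: "('a, 'b) monoid_scheme \<Rightarrow> ('a \<Rightarrow> complex) \<Rightarrow> 'a set" where
  "char_kernel G \<chi> = {g \<in> carrier G. \<chi> g = \<chi> \<one>\<^bsub>G\<^esub>}"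

definition XX :: "('a, 'b) monoid_scheme \<Rightarrow> ('a \<Rightarrow> complex) set" where
  "XX G = {\<chi> \<in> Irr G. group_center G \<subset> char_center G \<chi>}"

text \<open>K(G): intersection of kernels over X (taken inside carrier G; equals G if X is empty).\<close>
definition KK :: "('a, 'b) monoid_scheme \<Rightarrow> 'a set" where
  "KK G = carrier G \<inter> (\<Inter>\<chi> \<in> XX G. char_kernel G \<chi>)"

end

theory Submission
  imports Defs "Jordan_Normal_Form.Schur_Decomposition"
begin

lemma trace_comm:
  fixes C D :: "complex mat"
  assumes C: "C \<in> carrier_mat n m" and D: "D \<in> carrier_mat m n"
  shows "mat_trace (C * D) = mat_trace (D * C)"
proof -
  have "mat_trace (C * D) = (\<Sum>i<n. \<Sum>k<m. C $$ (i,k) * D $$ (k,i))"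
    using C D by (simp add: mat_trace_def scalar_prod_def atLeast0LessThan)
  also have "\<dots> = (\<Sum>k<m. \<Sum>i<n. D $$ (k,i) * C $$ (i,k))"
    by (subst sum.swap) (simp add: mult.commute)
  also have "\<dots> = mat_trace (D * C)"
    using C D by (simp add: mat_trace_def scalar_prod_def atLeast0LessThan)
  finally show ?thesis .
qed

lemma trace_similar:
  fixes A B P Q :: "complex mat"
  assumes "similar_mat_wit A B P Q"
  shows "mat_trace A = mat_trace B"
proof -
  from similar_mat_witD[OF refl assms] obtain n where
    c: "{A, B, P, Q} \<subseteq> carrier_mat n n" "P * Q = 1\<^sub>m n" "Q * P = 1\<^sub>m n" and A: "A = P * B * Q" by blast
  have "mat_trace A = mat_trace (P * (B * Q))" using A c by (simp add: assoc_mult_mat[of P n n B n Q n])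
  also have "\<dots> = mat_trace ((B * Q) * P)" using c by (intro trace_comm) auto
  also have "(B * Q) * P = B" using c by (simp add: assoc_mult_mat[of B n n Q n P n] right_mult_one_mat[of B n n])
  finally show ?thesis .
qed


lemma norm_sum_eq_card:
  fixes f :: "nat \<Rightarrow> complex"
  assumes n: "n > 0" and f1: "\<And>i. i < n \<Longrightarrow> cmod (f i) = 1"
    and s: "cmod (\<Sum>i<n. f i) = real n"
  shows "\<And>i. i < n \<Longrightarrow> f i = (\<Sum>i<n. f i) / of_nat n"
proof -
  define S where "S = (\<Sum>i<n. f i)"
  define u where "u = S / of_nat n"
  have u1: "cmod u = 1" using s n unfolding u_def S_def by (simp add: norm_divide)
  have le: "Re (f i * cnj u) \<le> 1" if "i < n" for i
    using complex_Re_le_cmod[of "f i * cnj u"] f1[OF that] u1 by (simp add: norm_mult)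
  have "(\<Sum>i<n. Re (f i * cnj u)) = Re (S * cnj u)"
    unfolding S_def by (simp add: sum_distrib_right Re_sum)
  also have "S * cnj u = S * cnj S / of_nat n" unfolding u_def by simp
  also have "S * cnj S = of_real ((cmod S)^2)" using complex_norm_square[of S] by simp
  also have "Re (of_real ((cmod S)^2) / of_nat n) = real n"
    using s n unfolding S_def by (simp add: power2_eq_square)
  finally have sumeq: "(\<Sum>i<n. Re (f i * cnj u)) = real n" .
  have "(\<Sum>i<n. 1 - Re (f i * cnj u)) = 0" using sumeq by (simp add: sum_subtractf)
  then have re1: "Re (f i * cnj u) = 1" if "i < n" for i
    using sum_nonneg_eq_0_iff[of "{..<n}" "\<lambda>i. 1 - Re (f i * cnj u)"] le that by auto
  fix i assume i: "i < n"
  have nm: "cmod (f i * cnj u) = 1" using f1[OF i] u1 by (simp add: norm_mult)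
  have "(Re (f i * cnj u))^2 + (Im (f i * cnj u))^2 = 1"
    using nm by (simp add: cmod_def)
  then have "Im (f i * cnj u) = 0" using re1[OF i] by simp
  then have e1: "f i * cnj u = 1" using re1[OF i] by (simp add: complex_eq_iff)
  have "cnj u * u = 1" using u1 by (metis complex_norm_square mult.commute of_real_1 one_power2)
  then have "f i = f i * (cnj u * u)" by simp
  also have "\<dots> = u" using e1 by (simp add: mult.assoc[symmetric])
  finally show "f i = S / of_nat n" unfolding u_def .
qed

lemma diag_root:
  fixes B :: "complex mat"
  assumes B: "B \<in> carrier_mat n n" and ut: "upper_triangular B"
    and pw: "B ^\<^sub>m m = 1\<^sub>m n" and i: "i < n"
  shows "(B $$ (i,i)) ^ m = 1"
proof -
  let ?d = "B $$ (i,i)"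
  have mem: "?d \<in> set (diag_mat B)" using B i by (auto simp: diag_mat_def)
  have "poly (char_poly B) ?d = 0"
    unfolding char_poly_upper_triangular[OF B ut] poly_prod_list
    using mem by (auto simp: prod_list_zero_iff)
  then have "eigenvalue B ?d" using eigenvalue_root_char_poly[OF B] by simp
  then obtain v where ev: "eigenvector B v ?d" unfolding eigenvalue_def by auto
  have "B ^\<^sub>m m *\<^sub>v v = ?d ^ m \<cdot>\<^sub>v v" by (rule eigenvector_pow[OF B ev])
  moreover have v: "v \<in> carrier_vec n" "v \<noteq> 0\<^sub>v n" using ev B unfolding eigenvector_def by auto
  ultimately have eq: "v = ?d ^ m \<cdot>\<^sub>v v" using pw by simp
  from v obtain j where j: "j < n" "v $ j \<noteq> 0" by (metis eq_vecI carrier_vecD index_zero_vec)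
  have "v $ j = ?d ^ m * v $ j" using arg_cong[OF eq, of "\<lambda>x. x $ j"] j v by simp
  then show ?thesis using j by simp
qed


lemma pow_eigen:
  fixes B :: "complex mat"
  assumes B: "B \<in> carrier_mat n n" and z: "z \<in> carrier_vec n" and Bz: "B *\<^sub>v z = c \<cdot>\<^sub>v z"
  shows "B ^\<^sub>m k *\<^sub>v z = c ^ k \<cdot>\<^sub>v z"
proof (induction k)
  case 0
  then show ?case using B z by simp
next
  case (Suc k)
  have "B ^\<^sub>m Suc k *\<^sub>v z = B ^\<^sub>m k *\<^sub>v (B *\<^sub>v z)"
    using B z by (simp add: assoc_mult_mat_vec[of _ n n B n z])
  also have "\<dots> = c \<cdot>\<^sub>v (B ^\<^sub>m k *\<^sub>v z)" using B z Bz by (simp add: mult_mat_vec[of _ n n])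
  also have "\<dots> = c ^ Suc k \<cdot>\<^sub>v z" using Suc by (simp add: smult_smult_assoc)
  finally show ?case .
qed

lemma tri_scalar:
  fixes B :: "complex mat"
  assumes B: "B \<in> carrier_mat n n" and ut: "upper_triangular B"
    and diag: "\<And>i. i < n \<Longrightarrow> B $$ (i,i) = u"
    and pw: "B ^\<^sub>m m = 1\<^sub>m n" and m: "m > 0" and um: "u ^ m = 1"
  shows "B = u \<cdot>\<^sub>m 1\<^sub>m n"
proof (rule ccontr)
  assume ne: "B \<noteq> u \<cdot>\<^sub>m 1\<^sub>m n"
  have ex: "\<exists>j. j < n \<and> (\<exists>i<n. i \<noteq> j \<and> B $$ (i,j) \<noteq> 0)"
  proof (rule ccontr)
    assume "\<not> ?thesis"
    then have "B = u \<cdot>\<^sub>m 1\<^sub>m n" using B diag by (intro eq_matI) auto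
    with ne show False ..
  qed
  define P where "P j \<longleftrightarrow> j < n \<and> (\<exists>i<n. i \<noteq> j \<and> B $$ (i,j) \<noteq> 0)" for j
  define j0 where "j0 = (LEAST j. P j)"
  have Pj0: "P j0" unfolding j0_def by (rule LeastI_ex) (use ex P_def in auto)
  then have j0n: "j0 < n" unfolding P_def by auto
  have small: "B $$ (i,k) = 0" if "k < j0" "i < n" "i \<noteq> k" for k i
  proof -
    have "\<not> P k" using not_less_Least[of k P] that(1) unfolding j0_def by auto
    then show ?thesis using that j0n unfolding P_def by auto
  qed
  obtain i0 where i0: "i0 < n" "i0 \<noteq> j0" "B $$ (i0,j0) \<noteq> 0" using Pj0 unfolding P_def by auto
  define w where "w = vec n (\<lambda>i. if i = j0 then 0 else B $$ (i,j0))"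
  define v :: "complex vec" where "v = unit_vec n j0"
  have u0: "u \<noteq> 0" using um m by (cases m) auto
  define z where "z = inverse u \<cdot>\<^sub>v w"
  have w: "w \<in> carrier_vec n" unfolding w_def by simp
  have v: "v \<in> carrier_vec n" unfolding v_def by simp
  have z: "z \<in> carrier_vec n" unfolding z_def using w by simp
  have wz: "w = u \<cdot>\<^sub>v z" unfolding z_def using u0 by (simp add: smult_smult_assoc)
  have Bv: "B *\<^sub>v v = u \<cdot>\<^sub>v v + u \<cdot>\<^sub>v z"
  proof (rule eq_vecI)
    fix i assume i: "i < dim_vec (u \<cdot>\<^sub>v v + u \<cdot>\<^sub>v z)"
    then have i: "i < n" using z by simp
    have "(B *\<^sub>v v) $ i = B $$ (i, j0)"
      using B i j0n unfolding v_def by (simp add: scalar_prod_right_unit)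
    then show "(B *\<^sub>v v) $ i = (u \<cdot>\<^sub>v v + u \<cdot>\<^sub>v z) $ i"
      using i j0n diag[of i] v z unfolding wz[symmetric] by (auto simp: w_def v_def)
  qed (use B v z in simp)
  have Bw: "B *\<^sub>v w = u \<cdot>\<^sub>v w"
  proof (rule eq_vecI)
    fix i assume i: "i < dim_vec (u \<cdot>\<^sub>v w)"
    then have i: "i < n" using w by simp
    have trm: "B $$ (i,k) * w $ k = (if k = i then u * w $ i else 0)" if k: "k < n" for k
    proof (cases "k = i")
      case True then show ?thesis using diag[OF i] by simp
    next
      case False
      show ?thesis
      proof (cases "w $ k = 0")
        case True then show ?thesis using False by simp
      next
        case wk: False
        then have "k \<noteq> j0" "B $$ (k,j0) \<noteq> 0" using k unfolding w_def by (auto split: if_splits)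
        moreover have "\<not> j0 < k \<or> B $$ (k,j0) = 0" using upper_triangularD[OF ut, of j0 k] B k by auto
        ultimately have "k < j0" by auto
        then show ?thesis using small[of k i] i False by simp
      qed
    qed
    have "(B *\<^sub>v w) $ i = (\<Sum>k\<in>{0..<n}. B $$ (i,k) * w $ k)"
      using B i w by (simp add: scalar_prod_def)
    also have "\<dots> = (\<Sum>k\<in>{0..<n}. if k = i then u * w $ i else 0)"
      by (rule sum.cong) (auto simp: trm)
    also have "\<dots> = u * w $ i" using i by simp
    finally show "(B *\<^sub>v w) $ i = (u \<cdot>\<^sub>v w) $ i" using i w by simp
  qed (use B w in simp)
  have Bz: "B *\<^sub>v z = u \<cdot>\<^sub>v z"
    unfolding z_def using B w Bw by (simp add: mult_mat_vec[of _ n n] smult_smult_assoc mult.commute)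
  have pk: "B ^\<^sub>m k *\<^sub>v v = u ^ k \<cdot>\<^sub>v v + (of_nat k * u ^ k) \<cdot>\<^sub>v z" for k
  proof (induction k)
    case 0
    then show ?case using B v z by (intro eq_vecI) auto
  next
    case (Suc k)
    have "B ^\<^sub>m Suc k *\<^sub>v v = B ^\<^sub>m k *\<^sub>v (B *\<^sub>v v)"
      using B v by (simp add: assoc_mult_mat_vec[of _ n n B n v])
    also have "\<dots> = u \<cdot>\<^sub>v (B ^\<^sub>m k *\<^sub>v v) + u \<cdot>\<^sub>v (B ^\<^sub>m k *\<^sub>v z)"
      unfolding Bv using B v z
      by (simp add: mult_add_distrib_mat_vec[of _ n n] mult_mat_vec[of _ n n])
    also have "\<dots> = u ^ Suc k \<cdot>\<^sub>v v + (of_nat (Suc k) * u ^ Suc k) \<cdot>\<^sub>v z"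
      unfolding Suc pow_eigen[OF B z Bz] using v z
      by (intro eq_vecI) (auto simp: algebra_simps)
    finally show ?case .
  qed
  have "v = v + of_nat m \<cdot>\<^sub>v z" using pk[of m] pw um v by simp
  then have "v $ i0 = (v + of_nat m \<cdot>\<^sub>v z) $ i0" by simp
  then have "v $ i0 = v $ i0 + of_nat m * z $ i0" using v z i0 by simp
  then have "z $ i0 = 0" using m by simp
  moreover have "z $ i0 = inverse u * B $$ (i0,j0)" using i0 unfolding z_def w_def by simp
  ultimately show False using u0 i0 by simp
qed


lemma finite_order_scalar:
  fixes A :: "complex mat"
  assumes A: "A \<in> carrier_mat n n" and n: "n > 0" and m: "m > 0"
    and pw: "A ^\<^sub>m m = 1\<^sub>m n" and tr: "cmod (mat_trace A) = real n"
  shows "\<exists>u. A = u \<cdot>\<^sub>m 1\<^sub>m n \<and> cmod u = 1"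
proof -
  obtain es where es: "char_poly A = (\<Prod>a\<leftarrow>es. [:- a, 1:])"
    using char_poly_factorized[OF A] by auto
  obtain B where B: "B \<in> carrier_mat n n" and ut: "upper_triangular B" and sim: "similar_mat A B"
    using schur_decomposition_exists[OF A es] by auto
  obtain P Q where sw: "similar_mat_wit A B P Q" using sim unfolding similar_mat_def by auto
  have dA: "n = dim_row A" using A by simp
  note sd = similar_mat_witD[OF dA sw]
  have "B ^\<^sub>m m = Q * A ^\<^sub>m m * P"
    using similar_mat_wit_pow_id[OF similar_mat_wit_sym[OF sw]] .
  also have "\<dots> = 1\<^sub>m n" unfolding pw using sd by (simp add: right_mult_one_mat[of Q n n])
  finally have pwB: "B ^\<^sub>m m = 1\<^sub>m n" .
  have root: "(B $$ (i,i)) ^ m = 1" if "i < n" for i using diag_root[OF B ut pwB that] .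
  have nrm: "cmod (B $$ (i,i)) = 1" if "i < n" for i
  proof -
    have "cmod (B $$ (i,i)) ^ m = 1 ^ m" using root[OF that] by (metis norm_one norm_power power_one)
    then show ?thesis using m power_eq_imp_eq_base[of "cmod (B $$ (i,i))" m 1] by simp
  qed
  have trB: "mat_trace A = (\<Sum>i<n. B $$ (i,i))"
    using trace_similar[OF sw] B by (simp add: mat_trace_def)
  define u where "u = (\<Sum>i<n. B $$ (i,i)) / of_nat n"
  have diag: "B $$ (i,i) = u" if "i < n" for i
    using norm_sum_eq_card[of n "\<lambda>i. B $$ (i,i)", OF n nrm tr[unfolded trB] that] unfolding u_def by simp
  have um: "u ^ m = 1" using root[OF n] diag[OF n] by simp
  have Bs: "B = u \<cdot>\<^sub>m 1\<^sub>m n" by (rule tri_scalar[OF B ut diag pwB m um])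
  have "A = P * (u \<cdot>\<^sub>m 1\<^sub>m n) * Q" using sd Bs by simp
  also have "\<dots> = u \<cdot>\<^sub>m (P * Q)" using sd
    by (simp add: mult_smult_distrib[of P n n _ n] right_mult_one_mat[of P n n] mult_smult_assoc_mat[of P n n Q n])
  also have "\<dots> = u \<cdot>\<^sub>m 1\<^sub>m n" using sd by simp
  finally have "A = u \<cdot>\<^sub>m 1\<^sub>m n" .
  moreover have "cmod u = 1" using nrm[OF n] diag[OF n] by simp
  ultimately show ?thesis by auto
qed


lemma tr_smult_one: "mat_trace (u \<cdot>\<^sub>m 1\<^sub>m n) = u * of_nat n"
  by (simp add: mat_trace_def)

lemma pow_smult_one: "(u \<cdot>\<^sub>m 1\<^sub>m n) ^\<^sub>m k = (u ^ k :: complex) \<cdot>\<^sub>m 1\<^sub>m n"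
proof (induction k)
  case 0 then show ?case by (intro eq_matI) auto
next
  case (Suc k)
  have t: "\<And>i j. (u ^ k * (if i = j then 1 else 0) * (u * (if i = j then 1 else 0)) :: complex)
      = (if i = j then u * u ^ k else 0)" by auto
  from Suc show ?case by (intro eq_matI) (auto simp: scalar_prod_def t)
qed

lemma tr_one: "mat_trace (1\<^sub>m n) = of_nat n"
  by (simp add: mat_trace_def)

lemma schur_scalar:
  fixes \<rho> :: "'a \<Rightarrow> complex mat"
  assumes irr: "irreducible_rep G n \<rho>" and A: "A \<in> carrier_mat n n"
    and comm: "\<And>x. x \<in> carrier G \<Longrightarrow> A * \<rho> x = \<rho> x * A"
  shows "\<exists>c. A = c \<cdot>\<^sub>m 1\<^sub>m n"
proof -
  have n: "n > 0" and rep: "representation G n \<rho>" using irr unfolding irreducible_rep_def by auto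
  have rc: "\<rho> x \<in> carrier_mat n n" if "x \<in> carrier G" for x using rep that unfolding representation_def by auto
  obtain es where es: "char_poly A = (\<Prod>a\<leftarrow>es. [:- a, 1:])" "length es = n"
    using char_poly_factorized[OF A] by auto
  then have "es \<noteq> []" using n by auto
  then obtain e where e: "e \<in> set es" by (cases es) auto
  have "poly (char_poly A) e = 0"
    unfolding es poly_prod_list using e by (auto simp: prod_list_zero_iff)
  then have "eigenvalue A e" using eigenvalue_root_char_poly[OF A] by simp
  then obtain v where ev: "eigenvector A v e" unfolding eigenvalue_def by auto
  then have v: "v \<in> carrier_vec n" "v \<noteq> 0\<^sub>v n" "A *\<^sub>v v = e \<cdot>\<^sub>v v" using A unfolding eigenvector_def by auto
  define W where "W = {x \<in> carrier_vec n. A *\<^sub>v x = e \<cdot>\<^sub>v x}"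
  have inv: "invariant_subspace G n \<rho> W"
    unfolding invariant_subspace_def
  proof (intro conjI ballI allI)
    show "W \<subseteq> carrier_vec n" unfolding W_def by auto
    show "0\<^sub>v n \<in> W" unfolding W_def using A by auto
  next
    fix x y assume "x \<in> W" "y \<in> W"
    then show "x + y \<in> W" unfolding W_def using A
      by (auto simp: mult_add_distrib_mat_vec[of _ n n] smult_add_distrib_vec[of _ n])
  next
    fix c :: complex and x assume "x \<in> W"
    then show "c \<cdot>\<^sub>v x \<in> W" unfolding W_def using A
      by (auto simp: mult_mat_vec[of _ n n] smult_smult_assoc mult.commute)
  next
    fix g x assume g: "g \<in> carrier G" and x: "x \<in> W"
    have "A *\<^sub>v (\<rho> g *\<^sub>v x) = (A * \<rho> g) *\<^sub>v x" using A rc[OF g] x unfolding W_def by auto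
    also have "\<dots> = \<rho> g *\<^sub>v (A *\<^sub>v x)" using A rc[OF g] x comm[OF g] unfolding W_def by auto
    also have "\<dots> = e \<cdot>\<^sub>v (\<rho> g *\<^sub>v x)" using x rc[OF g] unfolding W_def by (auto simp: mult_mat_vec[of _ n n])
    finally show "\<rho> g *\<^sub>v x \<in> W" using x rc[OF g] unfolding W_def by auto
  qed
  then have "W = {0\<^sub>v n} \<or> W = carrier_vec n" using irr unfolding irreducible_rep_def by auto
  moreover have "v \<in> W" using v unfolding W_def by auto
  ultimately have W: "W = carrier_vec n" using v by auto
  have "A = e \<cdot>\<^sub>m 1\<^sub>m n"
  proof (rule eq_matI)
    fix i j assume ij: "i < dim_row (e \<cdot>\<^sub>m 1\<^sub>m n)" "j < dim_col (e \<cdot>\<^sub>m 1\<^sub>m n)"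
    then have i: "i < n" and j: "j < n" by auto
    have "unit_vec n j \<in> W" using W j by auto
    then have "A *\<^sub>v unit_vec n j = e \<cdot>\<^sub>v unit_vec n j" unfolding W_def by auto
    then have "(A *\<^sub>v unit_vec n j) $ i = (e \<cdot>\<^sub>v unit_vec n j) $ i" by simp
    then show "A $$ (i,j) = (e \<cdot>\<^sub>m 1\<^sub>m n) $$ (i,j)" using A i j by auto
  qed (use A in auto)
  then show ?thesis by blast
qed

context group
begin

lemma rep_carrier: "representation G n \<rho> \<Longrightarrow> x \<in> carrier G \<Longrightarrow> \<rho> x \<in> carrier_mat n n"
  unfolding representation_def by auto

lemma rep_mult: "representation G n \<rho> \<Longrightarrow> x \<in> carrier G \<Longrightarrow> y \<in> carrier G \<Longrightarrow> \<rho> (x \<otimes> y) = \<rho> x * \<rho> y"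
  unfolding representation_def by auto

lemma rep_one: "representation G n \<rho> \<Longrightarrow> \<rho> \<one> = 1\<^sub>m n"
  unfolding representation_def by auto

lemma rep_pow:
  assumes rep: "representation G n \<rho>" and g: "g \<in> carrier G"
  shows "\<rho> (g [^] k) = \<rho> g ^\<^sub>m k"
proof (induction k)
  case 0 then show ?case using rep_one[OF rep] rep_carrier[OF rep g] by simp
next
  case (Suc k)
  then show ?case using rep_mult[OF rep nat_pow_closed[OF g] g] by (simp add: nat_pow_Suc)
qed

lemma rep_inv:
  assumes rep: "representation G n \<rho>" and g: "g \<in> carrier G"
  shows "\<rho> g * \<rho> (inv g) = 1\<^sub>m n" "\<rho> (inv g) * \<rho> g = 1\<^sub>m n"
  using rep_mult[OF rep g inv_closed[OF g]] rep_mult[OF rep inv_closed[OF g] g] rep_one[OF rep] g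
  by auto

lemma rep_order:
  assumes fin: "finite (carrier G)" and rep: "representation G n \<rho>" and g: "g \<in> carrier G"
  shows "\<rho> g ^\<^sub>m Coset.order G = 1\<^sub>m n" "Coset.order G > 0"
  using rep_pow[OF rep g, of "Coset.order G"] pow_order_eq_1[OF g] rep_one[OF rep] order_gt_0_iff_finite fin
  by auto

lemma char_center_eq:
  assumes fin: "finite (carrier G)" and irr: "irreducible_rep G n \<rho>"
  shows "char_center G (\<lambda>g\<in>carrier G. mat_trace (\<rho> g)) =
    {g \<in> carrier G. \<exists>u. \<rho> g = u \<cdot>\<^sub>m 1\<^sub>m n \<and> cmod u = 1}"
proof -
  have n: "n > 0" and rep: "representation G n \<rho>" using irr unfolding irreducible_rep_def by auto
  have one: "mat_trace (\<rho> \<one>) = of_nat n" using rep_one[OF rep] tr_one by simp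
  have "(complex_of_real (cmod (mat_trace (\<rho> g))) = mat_trace (\<rho> \<one>)) \<longleftrightarrow>
        (\<exists>u. \<rho> g = u \<cdot>\<^sub>m 1\<^sub>m n \<and> cmod u = 1)" if g: "g \<in> carrier G" for g
  proof
    assume "complex_of_real (cmod (mat_trace (\<rho> g))) = mat_trace (\<rho> \<one>)"
    then have "cmod (mat_trace (\<rho> g)) = real n" unfolding one by (metis of_real_eq_iff of_real_of_nat_eq)
    then show "\<exists>u. \<rho> g = u \<cdot>\<^sub>m 1\<^sub>m n \<and> cmod u = 1"
      by (intro finite_order_scalar[OF rep_carrier[OF rep g] n rep_order(2)[OF fin rep g] rep_order(1)[OF fin rep g]])
  next
    assume "\<exists>u. \<rho> g = u \<cdot>\<^sub>m 1\<^sub>m n \<and> cmod u = 1"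
    then obtain u where "\<rho> g = u \<cdot>\<^sub>m 1\<^sub>m n" "cmod u = 1" by auto
    then show "complex_of_real (cmod (mat_trace (\<rho> g))) = mat_trace (\<rho> \<one>)"
      unfolding one by (simp add: tr_smult_one norm_mult)
  qed
  then show ?thesis unfolding char_center_def by auto
qed

lemma char_kernel_eq:
  assumes fin: "finite (carrier G)" and irr: "irreducible_rep G n \<rho>"
  shows "char_kernel G (\<lambda>g\<in>carrier G. mat_trace (\<rho> g)) = {g \<in> carrier G. \<rho> g = 1\<^sub>m n}"
proof -
  have n: "n > 0" and rep: "representation G n \<rho>" using irr unfolding irreducible_rep_def by auto
  have one: "mat_trace (\<rho> \<one>) = of_nat n" using rep_one[OF rep] tr_one by simp
  have "mat_trace (\<rho> g) = mat_trace (\<rho> \<one>) \<longleftrightarrow> \<rho> g = 1\<^sub>m n" if g: "g \<in> carrier G" for g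
  proof
    assume t: "mat_trace (\<rho> g) = mat_trace (\<rho> \<one>)"
    then have "cmod (mat_trace (\<rho> g)) = real n" unfolding one by simp
    then obtain u where u: "\<rho> g = u \<cdot>\<^sub>m 1\<^sub>m n"
      using finite_order_scalar[OF rep_carrier[OF rep g] n rep_order(2)[OF fin rep g] rep_order(1)[OF fin rep g]] by auto
    then have "u * of_nat n = of_nat n" using t unfolding one by (simp add: tr_smult_one)
    then have "u = 1" using n by simp
    then show "\<rho> g = 1\<^sub>m n" using u by (intro eq_matI) auto
  qed (simp add: rep_one[OF rep])
  then show ?thesis unfolding char_kernel_def by auto
qed

lemma kernel_normal:
  assumes rep: "representation G n \<rho>"
  shows "{g \<in> carrier G. \<rho> g = 1\<^sub>m n} \<lhd> G"
  unfolding normal_inv_iff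
proof (intro conjI ballI)
  show "subgroup {g \<in> carrier G. \<rho> g = 1\<^sub>m n} G"
  proof (rule subgroupI)
    show "{g \<in> carrier G. \<rho> g = 1\<^sub>m n} \<noteq> {}" using rep_one[OF rep] by auto
  next
    fix a assume a: "a \<in> {g \<in> carrier G. \<rho> g = 1\<^sub>m n}"
    then have "\<rho> (inv a) = \<rho> (inv a) * \<rho> a"
      using rep_carrier[OF rep inv_closed[of a]] right_mult_one_mat[of "\<rho> (inv a)" n n] by auto
    also have "\<dots> = 1\<^sub>m n" using a rep_inv(2)[OF rep, of a] by simp
    finally show "inv a \<in> {g \<in> carrier G. \<rho> g = 1\<^sub>m n}" using a by auto
  next
    fix a b assume "a \<in> {g \<in> carrier G. \<rho> g = 1\<^sub>m n}" "b \<in> {g \<in> carrier G. \<rho> g = 1\<^sub>m n}"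
    then show "a \<otimes> b \<in> {g \<in> carrier G. \<rho> g = 1\<^sub>m n}" using rep_mult[OF rep] by auto
  qed auto
next
  fix x h assume x: "x \<in> carrier G" and h: "h \<in> {g \<in> carrier G. \<rho> g = 1\<^sub>m n}"
  have "\<rho> (x \<otimes> h \<otimes> inv x) = \<rho> x * \<rho> h * \<rho> (inv x)"
    using x h by (simp add: rep_mult[OF rep])
  also have "\<dots> = 1\<^sub>m n" using h rep_carrier[OF rep x] rep_inv[OF rep x] by (simp add: right_mult_one_mat)
  finally show "x \<otimes> h \<otimes> inv x \<in> {g \<in> carrier G. \<rho> g = 1\<^sub>m n}" using x h by auto
qed

lemma coset_eq_iff:
  assumes N: "subgroup N G" and a: "a \<in> carrier G" and b: "b \<in> carrier G"
  shows "N #> a = N #> b \<longleftrightarrow> a \<otimes> inv b \<in> N"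
proof
  assume "N #> a = N #> b"
  then have "a \<in> N #> b" using rcos_self[OF a N] by simp
  then show "a \<otimes> inv b \<in> N" using subgroup.rcos_module_imp[OF N is_group b] by simp
next
  assume "a \<otimes> inv b \<in> N"
  then have "a \<in> N #> b" using subgroup.rcos_module_rev[OF N is_group b a] by simp
  then show "N #> a = N #> b" using repr_independence[OF _ b N] by simp
qed

lemma Z_rel_char:
  assumes N: "N \<lhd> G"
  shows "Z_rel G N = {g \<in> carrier G. \<forall>x \<in> carrier G. g \<otimes> x \<otimes> inv (x \<otimes> g) \<in> N}"
proof -
  interpret normal N G by (rule N)
  have sg: "subgroup N G" by (rule subgroup_axioms)
  have "N #> g \<in> group_center (G Mod N) \<longleftrightarrow> (\<forall>x \<in> carrier G. g \<otimes> x \<otimes> inv (x \<otimes> g) \<in> N)"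
    if g: "g \<in> carrier G" for g
  proof -
    have "N #> g \<in> group_center (G Mod N) \<longleftrightarrow>
          (\<forall>x \<in> carrier G. (N #> g) <#> (N #> x) = (N #> x) <#> (N #> g))"
      using g unfolding group_center_def FactGroup_def RCOSETS_def by auto
    also have "\<dots> \<longleftrightarrow> (\<forall>x \<in> carrier G. N #> (g \<otimes> x) = N #> (x \<otimes> g))"
      using g by (simp add: rcos_sum)
    also have "\<dots> \<longleftrightarrow> (\<forall>x \<in> carrier G. g \<otimes> x \<otimes> inv (x \<otimes> g) \<in> N)"
      using g by (simp add: coset_eq_iff[OF sg])
    finally show ?thesis .
  qed
  then show ?thesis unfolding Z_rel_def by auto
qed

lemma per_rep:
  assumes fin: "finite (carrier G)" and irr: "irreducible_rep G n \<rho>" and g: "g \<in> carrier G"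
  shows "(\<forall>x \<in> carrier G. \<rho> (g \<otimes> x \<otimes> inv (x \<otimes> g)) = 1\<^sub>m n) \<longleftrightarrow>
         (\<exists>u. \<rho> g = u \<cdot>\<^sub>m 1\<^sub>m n \<and> cmod u = 1)"
proof -
  have n: "n > 0" and rep: "representation G n \<rho>" using irr unfolding irreducible_rep_def by auto
  note rc = rep_carrier[OF rep]
  have key: "\<rho> (g \<otimes> x \<otimes> inv (x \<otimes> g)) = 1\<^sub>m n \<longleftrightarrow> \<rho> g * \<rho> x = \<rho> x * \<rho> g"
    if x: "x \<in> carrier G" for x
  proof -
    have xg: "x \<otimes> g \<in> carrier G" using x g by simp
    have eq: "\<rho> (g \<otimes> x \<otimes> inv (x \<otimes> g)) = (\<rho> g * \<rho> x) * \<rho> (inv (x \<otimes> g))"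
      using x g by (simp add: rep_mult[OF rep])
    have M: "\<rho> g * \<rho> x \<in> carrier_mat n n" using rc[OF g] rc[OF x] by simp
    have "(\<rho> g * \<rho> x) * \<rho> (inv (x \<otimes> g)) = 1\<^sub>m n \<longleftrightarrow> \<rho> g * \<rho> x = \<rho> (x \<otimes> g)"
    proof
      assume h: "(\<rho> g * \<rho> x) * \<rho> (inv (x \<otimes> g)) = 1\<^sub>m n"
      have "\<rho> g * \<rho> x = (\<rho> g * \<rho> x) * (\<rho> (inv (x \<otimes> g)) * \<rho> (x \<otimes> g))"
        using rep_inv(2)[OF rep xg] M by (simp add: right_mult_one_mat)
      also have "\<dots> = ((\<rho> g * \<rho> x) * \<rho> (inv (x \<otimes> g))) * \<rho> (x \<otimes> g)"
        using M rc[OF xg] rc[OF inv_closed[OF xg]] by (simp add: assoc_mult_mat[of _ n n _ n _ n])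
      also have "\<dots> = \<rho> (x \<otimes> g)" using h rc[OF xg] by simp
      finally show "\<rho> g * \<rho> x = \<rho> (x \<otimes> g)" .
    next
      assume "\<rho> g * \<rho> x = \<rho> (x \<otimes> g)"
      then show "(\<rho> g * \<rho> x) * \<rho> (inv (x \<otimes> g)) = 1\<^sub>m n" using rep_inv(1)[OF rep xg] by simp
    qed
    then show ?thesis unfolding eq using rep_mult[OF rep x g] by simp
  qed
  show ?thesis
  proof
    assume h: "\<forall>x \<in> carrier G. \<rho> (g \<otimes> x \<otimes> inv (x \<otimes> g)) = 1\<^sub>m n"
    then have "\<And>x. x \<in> carrier G \<Longrightarrow> \<rho> g * \<rho> x = \<rho> x * \<rho> g" using key by auto
    then obtain c where c: "\<rho> g = c \<cdot>\<^sub>m 1\<^sub>m n" using schur_scalar[OF irr rc[OF g]] by blast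
    have "c ^ Coset.order G \<cdot>\<^sub>m 1\<^sub>m n = 1\<^sub>m n" using rep_order(1)[OF fin rep g] unfolding c pow_smult_one .
    then have "(c ^ Coset.order G \<cdot>\<^sub>m 1\<^sub>m n) $$ (0,0) = (1\<^sub>m n :: complex mat) $$ (0,0)" by simp
    then have "c ^ Coset.order G = 1" using n by simp
    then have "cmod c ^ Coset.order G = 1 ^ Coset.order G" by (metis norm_one norm_power power_one)
    then have "cmod c = 1" using rep_order(2)[OF fin rep g] power_eq_imp_eq_base[of "cmod c" "Coset.order G" 1] by simp
    then show "\<exists>u. \<rho> g = u \<cdot>\<^sub>m 1\<^sub>m n \<and> cmod u = 1" using c by auto
  next
    assume "\<exists>u. \<rho> g = u \<cdot>\<^sub>m 1\<^sub>m n \<and> cmod u = 1"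
    then obtain u where u: "\<rho> g = u \<cdot>\<^sub>m 1\<^sub>m n" by auto
    have "\<rho> g * \<rho> x = \<rho> x * \<rho> g" if x: "x \<in> carrier G" for x
      unfolding u using rc[OF x]
      by (simp add: mult_smult_distrib[of _ n n _ n] mult_smult_assoc_mat[of _ n n _ n] left_mult_one_mat right_mult_one_mat)
    then show "\<forall>x \<in> carrier G. \<rho> (g \<otimes> x \<otimes> inv (x \<otimes> g)) = 1\<^sub>m n" using key by auto
  qed
qed

end


lemma (in group) main_eq:
  assumes fin: "finite (carrier G)"
  shows "Z_rel G (KK G) = carrier G \<inter> (\<Inter>\<psi> \<in> XX G. char_center G \<psi>)"
proof -
  have wit: "\<exists>n \<rho>. irreducible_rep G n \<rho> \<and> \<chi> = (\<lambda>g\<in>carrier G. mat_trace (\<rho> g))"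
    if "\<chi> \<in> XX G" for \<chi>
    using that unfolding XX_def Irr_def by auto
  have kn: "char_kernel G \<chi> \<lhd> G" if c: "\<chi> \<in> XX G" for \<chi>
  proof -
    obtain n \<rho> where irr: "irreducible_rep G n \<rho>" and ch: "\<chi> = (\<lambda>g\<in>carrier G. mat_trace (\<rho> g))"
      using wit[OF c] by auto
    have rep: "representation G n \<rho>" using irr unfolding irreducible_rep_def by auto
    show ?thesis unfolding ch char_kernel_eq[OF fin irr] by (rule kernel_normal[OF rep])
  qed
  have memK: "h \<in> KK G \<longleftrightarrow> h \<in> carrier G \<and> (\<forall>\<chi>\<in>XX G. h \<in> char_kernel G \<chi>)" for h
    unfolding KK_def by auto
  have KN: "KK G \<lhd> G"
    unfolding normal_inv_iff
  proof (intro conjI ballI)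
    show "subgroup (KK G) G"
    proof (rule subgroupI)
      show "KK G \<subseteq> carrier G" using memK by auto
      have "\<one> \<in> KK G" using memK subgroup.one_closed[OF normal_imp_subgroup[OF kn]] by auto
      then show "KK G \<noteq> {}" by auto
    next
      fix a assume "a \<in> KK G"
      then show "inv a \<in> KK G" using memK subgroup.m_inv_closed[OF normal_imp_subgroup[OF kn]] by auto
    next
      fix a b assume "a \<in> KK G" "b \<in> KK G"
      then show "a \<otimes> b \<in> KK G" using memK subgroup.m_closed[OF normal_imp_subgroup[OF kn]] by auto
    qed
  next
    fix x h assume "x \<in> carrier G" "h \<in> KK G"
    then show "x \<otimes> h \<otimes> inv x \<in> KK G" using memK kn unfolding normal_inv_iff by auto
  qed
  have per: "(\<forall>x\<in>carrier G. g \<otimes> x \<otimes> inv (x \<otimes> g) \<in> char_kernel G \<chi>) \<longleftrightarrow> g \<in> char_center G \<chi>"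
    if g: "g \<in> carrier G" and c: "\<chi> \<in> XX G" for g \<chi>
  proof -
    obtain n \<rho> where irr: "irreducible_rep G n \<rho>" and ch: "\<chi> = (\<lambda>g\<in>carrier G. mat_trace (\<rho> g))"
      using wit[OF c] by auto
    show ?thesis unfolding ch char_kernel_eq[OF fin irr] char_center_eq[OF fin irr]
      using per_rep[OF fin irr g] g by auto
  qed
  have "(\<forall>x\<in>carrier G. g \<otimes> x \<otimes> inv (x \<otimes> g) \<in> KK G) \<longleftrightarrow> (\<forall>\<chi>\<in>XX G. g \<in> char_center G \<chi>)"
    if g: "g \<in> carrier G" for g
  proof -
    have "(\<forall>x\<in>carrier G. g \<otimes> x \<otimes> inv (x \<otimes> g) \<in> KK G) \<longleftrightarrow>
          (\<forall>\<chi>\<in>XX G. \<forall>x\<in>carrier G. g \<otimes> x \<otimes> inv (x \<otimes> g) \<in> char_kernel G \<chi>)"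
      using g memK by auto
    also have "\<dots> \<longleftrightarrow> (\<forall>\<chi>\<in>XX G. g \<in> char_center G \<chi>)" using per[OF g] by auto
    finally show ?thesis .
  qed
  then show ?thesis unfolding Z_rel_char[OF KN] by auto
qed

theorem lemma3p9:
  fixes G :: "('a, 'b) monoid_scheme"
  assumes "group G" and "finite (carrier G)" and "\<not> comm_group G"
  shows "Z_rel G (KK G) = carrier G \<inter> (\<Inter>\<psi> \<in> XX G. char_center G \<psi>)"
  using group.main_eq[OF assms(1,2)] .

end
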